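(* Let $B,C\subset\mathbb{R}^p$ and $w:(B\cup C)\times(B\cup C)\to[0,\infty]$. Then for every positive $d\le p$ and every $s\ge d$, $$\underline{h}^w_{s,d}(B\cup C)^{-d/s}\le\underline{h}^w_{s,d}(B)^{-d/s}+\underline{h}^w_{s,d}(C)^{-d/s},$$ with the conventions $0^{-d/s}=\infty$ and $\infty^{-d/s}=0$.
   Context: For $E\subset\mathbb{R}^p$ and a weight $w$ defined on $E\times E$, an $N$-point configuration in $E$ is a multiset $\omega_N=\{x_1,\dots,x_N\}\subset E$; $P^w_s(E;\omega_N):=\inf_{y\in E}\sum_j w(y,x_j)|y-x_j|^{-s}$, $\mathcal{P}^w_s(E;N):=\sup_{\omega_N\subset E}P^w_s(E;\omega_N)$, $\tau_{s,d}(N)=N^{s/d}$ for $s>d$ and $\tau_{d,d}(N)=N\log N$, and $\underline{h}^w_{s,d}(E):=\liminf_{N\to\infty}\mathcal{P}^w_s(E;N)/\tau_{s,d}(N)$ (with $w$ restricted to $E\times E$). *)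

theory Defs
  imports "HOL-Analysis.Analysis"
begin

definition riesz_ker :: "real \<Rightarrow> 'a::euclidean_space \<Rightarrow> 'a \<Rightarrow> ennreal" where
  "riesz_ker s y x = (if y = x then \<infinity> else ennreal (dist y x powr (- s)))"

definition point_polarization ::
  "('a::euclidean_space \<Rightarrow> 'a \<Rightarrow> ennreal) \<Rightarrow> real \<Rightarrow> 'a set \<Rightarrow> 'a multiset \<Rightarrow> ennreal" where
  "point_polarization w s E \<omega> = (INF y\<in>E. \<Sum>\<^sub># (image_mset (\<lambda>x. w y x * riesz_ker s y x) \<omega>))"

definition configs :: "'a set \<Rightarrow> nat \<Rightarrow> 'a multiset set" where
  "configs E N = {\<omega>. size \<omega> = N \<and> set_mset \<omega> \<subseteq> E}"

definition max_polarization ::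
  "('a::euclidean_space \<Rightarrow> 'a \<Rightarrow> ennreal) \<Rightarrow> real \<Rightarrow> 'a set \<Rightarrow> nat \<Rightarrow> ennreal" where
  "max_polarization w s E N = (SUP \<omega>\<in>configs E N. point_polarization w s E \<omega>)"

definition tau :: "real \<Rightarrow> real \<Rightarrow> nat \<Rightarrow> real" where
  "tau s d N = (if s > d then real N powr (s / d) else real N * ln (real N))"

definition lower_h ::
  "('a::euclidean_space \<Rightarrow> 'a \<Rightarrow> ennreal) \<Rightarrow> real \<Rightarrow> real \<Rightarrow> 'a set \<Rightarrow> ennreal" where
  "lower_h w s d E = liminf (\<lambda>N. max_polarization w s E N / ennreal (tau s d N))"

definition neg_pow :: "real \<Rightarrow> ennreal \<Rightarrow> ennreal" where
  "neg_pow a h = (if h = 0 then \<infinity> else if h = \<infinity> then 0 else ennreal (enn2real h powr (- a)))"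

end

theory Submission
  imports Defs "HOL-Real_Asymp.Real_Asymp"
begin

lemma pp_union:
  assumes "\<omega>B \<in> configs B n" "\<omega>C \<in> configs C m"
  shows "min (point_polarization w s B \<omega>B) (point_polarization w s C \<omega>C)
          \<le> point_polarization w s (B \<union> C) (\<omega>B + \<omega>C)"
  unfolding point_polarization_def
proof (rule INF_greatest)
  fix y assume y: "y \<in> B \<union> C"
  let ?f = "\<lambda>x. w y x * riesz_ker s y x"
  have eq: "\<Sum>\<^sub># (image_mset ?f (\<omega>B + \<omega>C)) = \<Sum>\<^sub># (image_mset ?f \<omega>B) + \<Sum>\<^sub># (image_mset ?f \<omega>C)"
    by simp
  show "min (INF y\<in>B. \<Sum>\<^sub># (image_mset (\<lambda>x. w y x * riesz_ker s y x) \<omega>B))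
             (INF y\<in>C. \<Sum>\<^sub># (image_mset (\<lambda>x. w y x * riesz_ker s y x) \<omega>C))
        \<le> \<Sum>\<^sub># (image_mset ?f (\<omega>B + \<omega>C))"
  proof (cases "y \<in> B")
    case True
    have "(INF y\<in>B. \<Sum>\<^sub># (image_mset (\<lambda>x. w y x * riesz_ker s y x) \<omega>B)) \<le> \<Sum>\<^sub># (image_mset ?f \<omega>B)"
      using True by (rule INF_lower)
    also have "\<dots> \<le> \<Sum>\<^sub># (image_mset ?f (\<omega>B + \<omega>C))" unfolding eq by simp
    finally show ?thesis by (simp add: min.coboundedI1)
  next
    case False
    then have yC: "y \<in> C" using y by auto
    have "(INF y\<in>C. \<Sum>\<^sub># (image_mset (\<lambda>x. w y x * riesz_ker s y x) \<omega>C)) \<le> \<Sum>\<^sub># (image_mset ?f \<omega>C)"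
      using yC by (rule INF_lower)
    also have "\<dots> \<le> \<Sum>\<^sub># (image_mset ?f (\<omega>B + \<omega>C))" unfolding eq by simp
    finally show ?thesis by (simp add: min.coboundedI2)
  qed
qed

lemma mp_union:
  "min (max_polarization w s B n) (max_polarization w s C m) \<le> max_polarization w s (B \<union> C) (n + m)"
proof (rule ccontr)
  let ?c = "max_polarization w s (B \<union> C) (n + m)"
  assume "\<not> ?thesis"
  then have c1: "?c < max_polarization w s B n" and c2: "?c < max_polarization w s C m" by (auto simp: not_le)
  obtain \<omega>B where b: "\<omega>B \<in> configs B n" "?c < point_polarization w s B \<omega>B"
    using c1 unfolding max_polarization_def less_SUP_iff by blast
  obtain \<omega>C where c: "\<omega>C \<in> configs C m" "?c < point_polarization w s C \<omega>C"
    using c2 unfolding max_polarization_def less_SUP_iff by blast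
  have "\<omega>B + \<omega>C \<in> configs (B \<union> C) (n + m)" using b(1) c(1) unfolding configs_def by auto
  then have "point_polarization w s (B \<union> C) (\<omega>B + \<omega>C) \<le> ?c"
    unfolding max_polarization_def by (rule SUP_upper)
  moreover have "min (point_polarization w s B \<omega>B) (point_polarization w s C \<omega>C)
          \<le> point_polarization w s (B \<union> C) (\<omega>B + \<omega>C)" by (rule pp_union[OF b(1) c(1)])
  ultimately show False using b(2) c(2) by (meson min_less_iff_conj order.trans not_le)
qed


lemma tau_growth:
  assumes d: "0 < d" "d \<le> s" and g: "0 < g" and c: "c < g powr (s/d)"
  shows "eventually (\<lambda>N. \<forall>k::nat. real k \<ge> g * real N - 1 \<longrightarrow> c * tau s d N \<le> tau s d k) sequentially"
proof -
  have ev1: "eventually (\<lambda>N::nat. g * real N - 1 \<ge> 1) sequentially" using g by real_asymp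
  have ev2: "eventually (\<lambda>N::nat. real N \<ge> 2) sequentially" by real_asymp
  show ?thesis
  proof (cases "s > d")
    case True
    define r where "r = s / d"
    have r: "r > 0" using True d unfolding r_def by simp
    have lim: "((\<lambda>N::nat. (g * real N - 1) powr r / real N powr r) \<longlongrightarrow> g powr r) sequentially"
      using g r by real_asymp
    have ev3: "eventually (\<lambda>N. c < (g * real N - 1) powr r / real N powr r) sequentially"
      using order_tendstoD(1)[OF lim] c unfolding r_def by simp
    show ?thesis using ev1 ev2 ev3
    proof eventually_elim
      case (elim N)
      have Np: "real N powr r > 0" using elim(2) by simp
      have "c * real N powr r < (g * real N - 1) powr r"
        using elim(3) Np by (simp add: field_simps)
      show ?case
      proof (intro allI impI)
        fix k :: nat assume k: "real k \<ge> g * real N - 1"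
        have "(g * real N - 1) powr r \<le> real k powr r"
          using k elim(1) r by (intro powr_mono2) auto
        with \<open>c * real N powr r < (g * real N - 1) powr r\<close> show "c * tau s d N \<le> tau s d k"
          using True unfolding tau_def r_def by simp
      qed
    qed
  next
    case False
    then have sd: "s = d" using d by simp
    have gp: "g powr (s/d) = g" using sd d g by simp
    have lim: "((\<lambda>N::nat. (g * real N - 1) * ln (g * real N - 1) / (real N * ln (real N))) \<longlongrightarrow> g) sequentially"
      using g by real_asymp
    have ev3: "eventually (\<lambda>N. c < (g * real N - 1) * ln (g * real N - 1) / (real N * ln (real N))) sequentially"
      using order_tendstoD(1)[OF lim] c gp by simp
    show ?thesis using ev1 ev2 ev3
    proof eventually_elim
      case (elim N)
      have Np: "real N * ln (real N) > 0" using elim(2) by simp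
      have "c * (real N * ln (real N)) < (g * real N - 1) * ln (g * real N - 1)"
        using elim(3) Np by (simp add: field_simps)
      show ?case
      proof (intro allI impI)
        fix k :: nat assume k: "real k \<ge> g * real N - 1"
        have "(g * real N - 1) * ln (g * real N - 1) \<le> real k * ln (real k)"
          using k elim(1) by (intro mult_mono ln_mono) auto
        with \<open>c * (real N * ln (real N)) < (g * real N - 1) * ln (g * real N - 1)\<close>
        show "c * tau s d N \<le> tau s d k"
          using False unfolding tau_def by simp
      qed
    qed
  qed
qed


lemma E1: assumes "0 < t" "0 \<le> c" "ennreal c < X / ennreal t" shows "ennreal (c * t) < X"
proof (cases X)
  case (real x)
  then show ?thesis using assms
    by (simp add: divide_ennreal ennreal_mult[symmetric] field_simps ennreal_less_iff)
qed simp

lemma E2: assumes "0 < t" "0 \<le> c" "ennreal (c * t) < X" shows "ennreal c < X / ennreal t"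
proof (cases X)
  case (real x)
  then show ?thesis using assms by (simp add: divide_ennreal field_simps ennreal_less_iff)
qed (use assms in \<open>simp add: ennreal_top_divide\<close>)

lemma E3: assumes "0 < x" "0 \<le> q" "ennreal q < h * ennreal x" shows "ennreal (q / x) < h"
proof (cases h)
  case (real y)
  then show ?thesis using assms by (simp add: ennreal_mult''[symmetric] field_simps ennreal_less_iff)
qed simp

lemma side_bound:
  assumes d: "0 < d" "d \<le> s" and g: "0 < g" and q: "0 \<le> q0" "q0 < q1"
    and lt: "ennreal q1 < lower_h w s d E * ennreal (g powr (s/d))"
  shows "eventually (\<lambda>N. \<forall>k::nat. real k \<ge> g * real N - 1 \<longrightarrow>
            ennreal (q0 * tau s d N) < max_polarization w s E k) sequentially"
proof -
  define x where "x = g powr (s/d)"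
  have xp: "x > 0" using g unfolding x_def by simp
  have q1p: "q1 > 0" using q by simp
  have "ennreal (q1 / x) < lower_h w s d E" using E3[OF xp _ lt[folded x_def]] q by simp
  then have "eventually (\<lambda>k. ennreal (q1 / x) < max_polarization w s E k / ennreal (tau s d k)) sequentially"
    unfolding lower_h_def by (rule less_LiminfD)
  moreover have "eventually (\<lambda>k::nat. real k \<ge> 2) sequentially" by real_asymp
  ultimately have "eventually (\<lambda>k. ennreal (q1 / x * tau s d k) < max_polarization w s E k) sequentially"
  proof eventually_elim
    case (elim k)
    have "tau s d k > 0" using elim(2) unfolding tau_def by auto
    then show ?case using E1[OF _ _ elim(1)] q1p xp by simp
  qed
  then obtain K where K: "\<And>k. k \<ge> K \<Longrightarrow> ennreal (q1 / x * tau s d k) < max_polarization w s E k"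
    unfolding eventually_sequentially by blast
  have c: "q0 * x / q1 < g powr (s/d)" using q xp q1p unfolding x_def[symmetric]
    by (simp add: field_simps)
  have ev1: "eventually (\<lambda>N::nat. g * real N - 1 \<ge> real K) sequentially" using g by real_asymp
  show ?thesis using tau_growth[OF d g c] ev1
  proof eventually_elim
    case (elim N)
    show ?case
    proof (intro allI impI)
      fix k :: nat assume k: "g * real N - 1 \<le> real k"
      have kK: "k \<ge> K" using k elim(2) by linarith
      have "q0 * x / q1 * tau s d N \<le> tau s d k" using elim(1) k by blast
      then have "q1 / x * (q0 * x / q1 * tau s d N) \<le> q1 / x * tau s d k"
        using q1p xp by (intro mult_left_mono) auto
      then have "q0 * tau s d N \<le> q1 / x * tau s d k" using q1p xp by (simp add: field_simps)
      then have "ennreal (q0 * tau s d N) \<le> ennreal (q1 / x * tau s d k)" by (rule ennreal_leI)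
      also have "\<dots> < max_polarization w s E k" using K[OF kK] .
      finally show "ennreal (q0 * tau s d N) < max_polarization w s E k" .
    qed
  qed
qed

lemma liminf_part:
  assumes d: "0 < d" "d \<le> s" and a: "0 < a" "a < 1"
  shows "min (lower_h w s d B * ennreal (a powr (s/d))) (lower_h w s d C * ennreal ((1-a) powr (s/d)))
           \<le> lower_h w s d (B \<union> C)"
  unfolding lower_h_def[of w s d "B \<union> C"]
proof (rule le_Liminf_iff[THEN iffD2], intro allI impI)
  fix q assume qlt: "q < min (lower_h w s d B * ennreal (a powr (s/d))) (lower_h w s d C * ennreal ((1-a) powr (s/d)))"
  obtain q' where q': "q < q'" "q' < min (lower_h w s d B * ennreal (a powr (s/d))) (lower_h w s d C * ennreal ((1-a) powr (s/d)))"
    using dense[OF qlt] by blast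
  have "q' < top" using q'(2) top.not_eq_extremum by fastforce
  then obtain q1 where q1: "q' = ennreal q1" "0 \<le> q1" by (cases q') auto
  have "q < top" using q' \<open>q' < top\<close> by simp
  then obtain q0 where q0: "q = ennreal q0" "0 \<le> q0" by (cases q) auto
  have q01: "q0 < q1" using q'(1) q0 q1 by (simp add: ennreal_less_iff)
  have evB: "eventually (\<lambda>N. \<forall>k::nat. real k \<ge> a * real N - 1 \<longrightarrow>
            ennreal (q0 * tau s d N) < max_polarization w s B k) sequentially"
    using q'(2) q1 by (intro side_bound[OF d a(1) q0(2) q01]) simp
  have evC: "eventually (\<lambda>N. \<forall>k::nat. real k \<ge> (1-a) * real N - 1 \<longrightarrow>
            ennreal (q0 * tau s d N) < max_polarization w s C k) sequentially"
    using q'(2) q1 a by (intro side_bound[OF d _ q0(2) q01]) simp_all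
  have ev2: "eventually (\<lambda>k::nat. real k \<ge> 2) sequentially" by real_asymp
  show "\<forall>\<^sub>F N in sequentially. q < max_polarization w s (B \<union> C) N / ennreal (tau s d N)"
    using evB evC ev2
  proof eventually_elim
    case (elim N)
    define n where "n = nat \<lfloor>a * real N\<rfloor>"
    have n1: "real n \<ge> a * real N - 1" unfolding n_def using a by linarith
    have n2: "real n \<le> a * real N" unfolding n_def using a by (simp add: of_nat_nat)
    have nN: "n \<le> N" using n2 a by (smt (verit) mult_left_le_one_le of_nat_0_le_iff of_nat_le_iff)
    have m1: "real (N - n) \<ge> (1 - a) * real N - 1" using n2 nN by (simp add: of_nat_diff algebra_simps)
    have "ennreal (q0 * tau s d N) < min (max_polarization w s B n) (max_polarization w s C (N - n))"
      using elim(1) elim(2) n1 m1 by simp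
    also have "\<dots> \<le> max_polarization w s (B \<union> C) (n + (N - n))" by (rule mp_union)
    also have "n + (N - n) = N" using nN by simp
    finally have lt: "ennreal (q0 * tau s d N) < max_polarization w s (B \<union> C) N" .
    have "tau s d N > 0" using elim(3) unfolding tau_def by auto
    then show ?case using E2[OF _ q0(2) lt] q0(1) by simp
  qed
qed


lemma min_le_cases: "min (x::ennreal) y \<le> z \<Longrightarrow> x \<le> z \<or> y \<le> z"
  by (simp add: min_le_iff_disj)

lemma opt_alpha:
  fixes b c e r :: real
  assumes b: "b > 0" and c: "c > 0" and e: "e > 0" and er: "e * r = 1"
  defines "S \<equiv> b powr (-e) + c powr (-e)"
  defines "\<alpha> \<equiv> b powr (-e) / S"
  shows "0 < \<alpha>" "\<alpha> < 1" "b * \<alpha> powr r = S powr (-r)" "c * (1 - \<alpha>) powr r = S powr (-r)"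
proof -
  have Sp: "S > 0" unfolding S_def using b c by (simp add: add_pos_pos)
  show "0 < \<alpha>" unfolding \<alpha>_def using b Sp by simp
  have bp: "b powr (-e) > 0" and cp: "c powr (-e) > 0" using b c by auto
  show "\<alpha> < 1" unfolding \<alpha>_def using bp cp Sp unfolding S_def by (simp add: divide_less_eq)
  have oma: "1 - \<alpha> = c powr (-e) / S" unfolding \<alpha>_def using Sp by (simp add: field_simps S_def)
  have k: "x * (x powr (-e) / S) powr r = S powr (-r)" if x: "x > 0" for x
  proof -
    have "(x powr (-e) / S) powr r = (x powr (-e)) powr r / S powr r"
      using x Sp by (simp add: powr_divide)
    also have "(x powr (-e)) powr r = x powr (- (e * r))" by (simp add: powr_powr)
    also have "\<dots> = 1 / x" using er x by (simp add: powr_minus_divide)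
    finally show ?thesis using x Sp by (simp add: powr_minus_divide)
  qed
  show "b * \<alpha> powr r = S powr (-r)" unfolding \<alpha>_def using k[OF b] .
  show "c * (1 - \<alpha>) powr r = S powr (-r)" unfolding oma using k[OF c] .
qed

theorem lemma3:
  fixes B C :: "'a::euclidean_space set"
    and w :: "'a \<Rightarrow> 'a \<Rightarrow> ennreal"
    and d s :: real
  assumes "0 < d" and "d \<le> real DIM('a)" and "d \<le> s"
  shows "neg_pow (d / s) (lower_h w s d (B \<union> C))
           \<le> neg_pow (d / s) (lower_h w s d B) + neg_pow (d / s) (lower_h w s d C)"
proof -
  define hB where "hB = lower_h w s d B"
  define hC where "hC = lower_h w s d C"
  define h where "h = lower_h w s d (B \<union> C)"
  define e where "e = d / s"
  define r where "r = s / d"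
  have sp: "s > 0" using assms by simp
  have e: "e > 0" unfolding e_def using assms sp by simp
  have r: "r > 0" unfolding r_def using assms sp by simp
  have er: "e * r = 1" unfolding e_def r_def using assms sp by simp
  have key: "\<And>a. 0 < a \<Longrightarrow> a < 1 \<Longrightarrow> min (hB * ennreal (a powr r)) (hC * ennreal ((1-a) powr r)) \<le> h"
    unfolding hB_def hC_def h_def r_def using assms by (intro liminf_part) auto
  have "neg_pow e h \<le> neg_pow e hB + neg_pow e hC"
  proof (cases "hB = 0 \<or> hC = 0 \<or> h = top")
    case True
    then show ?thesis unfolding neg_pow_def by auto
  next
    case False
    then have hB0: "hB \<noteq> 0" and hC0: "hC \<noteq> 0" and ht: "h \<noteq> top" by auto
    have half: "min (hB * ennreal ((1/2) powr r)) (hC * ennreal ((1 - 1/2) powr r)) \<le> h"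
      using key[of "1/2"] by simp
    have h0: "h \<noteq> 0"
    proof
      assume "h = 0"
      then have "hB * ennreal ((1/2) powr r) = 0 \<or> hC * ennreal ((1/2) powr r) = 0"
        using half by (auto simp: min_def split: if_splits)
      then show False using hB0 hC0 by (simp add: ennreal_eq_0_iff)
    qed
    obtain h1 where h1: "h = ennreal h1" "h1 > 0" using ht h0
      by (cases h) (auto simp: ennreal_eq_0_iff)
    have LHS: "neg_pow e h = ennreal (h1 powr (-e))" unfolding neg_pow_def using h1 h0 ht by simp
    show ?thesis
    proof (cases "hB = top")
      case hBt: True
      show ?thesis
      proof (cases "hC = top")
        case True
        then have "min (hB * ennreal ((1/2) powr r)) (hC * ennreal ((1 - 1/2) powr r)) = top"
          using hBt by (simp add: ennreal_mult_top)
        then show ?thesis using half ht by (simp add: top_le)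
      next
        case False
        obtain c where c: "hC = ennreal c" "c > 0" using False hC0
          by (cases hC) (auto simp: ennreal_eq_0_iff)
        have "c \<le> h1"
        proof (rule ccontr)
          assume "\<not> c \<le> h1"
          then have lt: "h1 < c" by simp
          define u where "u = (h1 / c + 1) / 2"
          have u: "0 < u" "u < 1" unfolding u_def using lt c h1 by (auto simp: field_simps)
          define t where "t = u powr e"
          have t: "0 < t" "t < 1" unfolding t_def using u e by (auto simp: powr01_less_one)
          have tr: "t powr r = u" unfolding t_def using er u by (simp add: powr_powr)
          have m: "min (hB * ennreal ((1 - t) powr r)) (hC * ennreal ((1 - (1 - t)) powr r)) \<le> h"
            using key[of "1 - t"] t by simp
          have "hB * ennreal ((1 - t) powr r) = top" using hBt t by (simp add: ennreal_mult_top)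
          moreover have "hC * ennreal ((1 - (1 - t)) powr r) = ennreal (c * u)"
            using c tr u by (simp add: ennreal_mult[symmetric])
          ultimately have "ennreal (c * u) \<le> ennreal h1" using m h1 by simp
          then have "c * u \<le> h1" using h1 by (simp add: ennreal_le_iff)
          then show False using lt c unfolding u_def by (simp add: field_simps)
        qed
        then have "h1 powr (-e) \<le> c powr (-e)" using c e by (intro powr_mono2') auto
        then have le: "ennreal (h1 powr (-e)) \<le> ennreal (c powr (-e))" by (rule ennreal_leI)
        have eq: "neg_pow e hB + neg_pow e hC = ennreal (c powr (-e))"
          using hBt c by (simp add: neg_pow_def)
        show ?thesis unfolding LHS eq by (rule le)
      qed
    next
      case hBf: False
      obtain b where b: "hB = ennreal b" "b > 0" using hBf hB0
        by (cases hB) (auto simp: ennreal_eq_0_iff)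
      show ?thesis
      proof (cases "hC = top")
        case hCt: True
        have "b \<le> h1"
        proof (rule ccontr)
          assume "\<not> b \<le> h1"
          then have lt: "h1 < b" by simp
          define u where "u = (h1 / b + 1) / 2"
          have u: "0 < u" "u < 1" unfolding u_def using lt b h1 by (auto simp: field_simps)
          define t where "t = u powr e"
          have t: "0 < t" "t < 1" unfolding t_def using u e by (auto simp: powr01_less_one)
          have tr: "t powr r = u" unfolding t_def using er u by (simp add: powr_powr)
          have m: "min (hB * ennreal (t powr r)) (hC * ennreal ((1 - t) powr r)) \<le> h"
            using key[of t] t by simp
          have "hC * ennreal ((1 - t) powr r) = top" using hCt t by (simp add: ennreal_mult_top)
          moreover have "hB * ennreal (t powr r) = ennreal (b * u)"
            using b tr u by (simp add: ennreal_mult[symmetric])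
          ultimately have "ennreal (b * u) \<le> ennreal h1" using m h1 by simp
          then have "b * u \<le> h1" using h1 by (simp add: ennreal_le_iff)
          then show False using lt b unfolding u_def by (simp add: field_simps)
        qed
        then have "h1 powr (-e) \<le> b powr (-e)" using b e by (intro powr_mono2') auto
        then have le: "ennreal (h1 powr (-e)) \<le> ennreal (b powr (-e))" by (rule ennreal_leI)
        have eq: "neg_pow e hB + neg_pow e hC = ennreal (b powr (-e))"
          using hCt b by (simp add: neg_pow_def)
        show ?thesis unfolding LHS eq by (rule le)
      next
        case False
        obtain c where c: "hC = ennreal c" "c > 0" using False hC0
          by (cases hC) (auto simp: ennreal_eq_0_iff)
        define S where "S = b powr (-e) + c powr (-e)"
        define \<alpha> where "\<alpha> = b powr (-e) / S"
        note o = opt_alpha[OF b(2) c(2) e er, folded S_def, folded \<alpha>_def]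
        have Sp: "S > 0" unfolding S_def using b c by (simp add: add_pos_pos)
        have m: "min (hB * ennreal (\<alpha> powr r)) (hC * ennreal ((1 - \<alpha>) powr r)) \<le> h"
          using key o(1,2) by simp
        have e1: "hB * ennreal (\<alpha> powr r) = ennreal (S powr (-r))"
          using b o(3) by (simp add: ennreal_mult[symmetric])
        have e2: "hC * ennreal ((1 - \<alpha>) powr r) = ennreal (S powr (-r))"
          using c o(4) o(2) by (simp add: ennreal_mult[symmetric])
        have "ennreal (S powr (-r)) \<le> ennreal h1" using m e1 e2 h1 by simp
        then have "S powr (-r) \<le> h1" using h1 by (simp add: ennreal_le_iff)
        then have "h1 powr (-e) \<le> (S powr (-r)) powr (-e)" using Sp e by (intro powr_mono2') auto
        also have "\<dots> = S" using er Sp by (simp add: powr_powr mult.commute)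
        finally have "h1 powr (-e) \<le> S" .
        then have le: "ennreal (h1 powr (-e)) \<le> ennreal S" by (rule ennreal_leI)
        have eq: "neg_pow e hB + neg_pow e hC = ennreal S"
          using b c unfolding S_def by (simp add: neg_pow_def ennreal_plus)
        show ?thesis unfolding LHS eq by (rule le)
      qed
    qed
  qed
  then show ?thesis unfolding hB_def hC_def h_def e_def .
qed

end
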